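(* Let ${\bm{x}}_i^m\in\mathbb{R}^d$ ($m\in[M]$, $i\in[n]$) satisfy $\|{\bm{x}}_i^m\|\le1$ and be linearly separable. Let $\ell(z)=\log(1+e^{-z})$, $F_m({\bm{w}})=\frac1n\sum_i\ell(\langle{\bm{w}},{\bm{x}}_i^m\rangle)$, $F=\frac1M\sum_mF_m$. Run Local GD with any ${\bm{w}}_0$, $\eta>0$, $K\in\mathbb{N}$: ${\bm{w}}_{r,0}^m={\bm{w}}_r$, ${\bm{w}}_{r,k+1}^m={\bm{w}}_{r,k}^m-\eta\nabla F_m({\bm{w}}_{r,k}^m)$ ($k=0,\dots,K-1$), ${\bm{w}}_{r+1}=\frac1M\sum_m{\bm{w}}_{r,K}^m$. If $F({\bm{w}}_r)\le1/(4\eta M)$ for some $r\ge0$, then for every $m\in[M]$, $F_m({\bm{w}}_{r,k}^m)$ is (non-increasing) decreasing in $k\in\{0,\dots,K\}$.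
   Context: Linear separability means there is ${\bm{w}}$ with $\langle{\bm{w}},{\bm{x}}_i^m\rangle>0$ for all $m,i$ (labels absorbed into data). *)

theory Defs
  imports "HOL-Analysis.Analysis"
begin

definition logloss :: "real \<Rightarrow> real" where
  "logloss z = ln (1 + exp (- z))"

definition Floc :: "nat \<Rightarrow> (nat \<Rightarrow> nat \<Rightarrow> 'a::real_inner) \<Rightarrow> nat \<Rightarrow> 'a \<Rightarrow> real" where
  "Floc n x m w = (1 / real n) * (\<Sum>i<n. logloss (w \<bullet> x m i))"

definition Fglob :: "nat \<Rightarrow> nat \<Rightarrow> (nat \<Rightarrow> nat \<Rightarrow> 'a::real_inner) \<Rightarrow> 'a \<Rightarrow> real" where
  "Fglob M n x w = (1 / real M) * (\<Sum>m<M. Floc n x m w)"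

definition grad :: "('a::real_inner \<Rightarrow> real) \<Rightarrow> 'a \<Rightarrow> 'a" where
  "grad f w = (SOME g. (f has_derivative (\<lambda>h. g \<bullet> h)) (at w))"

fun local_iter :: "real \<Rightarrow> ('a::real_inner \<Rightarrow> real) \<Rightarrow> 'a \<Rightarrow> nat \<Rightarrow> 'a" where
  "local_iter eta f w 0 = w"
| "local_iter eta f w (Suc k) =
     local_iter eta f w k - eta *\<^sub>R grad f (local_iter eta f w k)"

fun localGD :: "nat \<Rightarrow> nat \<Rightarrow> (nat \<Rightarrow> nat \<Rightarrow> 'a::real_inner) \<Rightarrow> real \<Rightarrow> nat \<Rightarrow> 'a \<Rightarrow> nat \<Rightarrow> 'a" where
  "localGD M n x eta K w0 0 = w0"
| "localGD M n x eta K w0 (Suc r) =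
     (1 / real M) *\<^sub>R (\<Sum>m<M. local_iter eta (Floc n x m) (localGD M n x eta K w0 r) K)"

end

theory Submission imports Defs begin

definition lp :: "real \<Rightarrow> real" where "lp z = - 1 / (1 + exp z)"
definition lpp :: "real \<Rightarrow> real" where "lpp z = exp z / (1 + exp z)^2"

lemma onepexp: "1 + exp (z::real) > 0" by (smt (verit) exp_gt_zero)

lemma logloss_deriv: "DERIV logloss z :> lp z"
proof -
  have "DERIV (\<lambda>z. ln (1 + exp (- z))) z :> (1 / (1 + exp (-z))) * (exp (-z) * (-1))"
    by (auto intro!: derivative_eq_intros simp: add_pos_pos)
  moreover have "(1 / (1 + exp (-z))) * (exp (-z) * (-1)) = lp z"
    unfolding lp_def by (simp add: field_simps exp_minus)
  ultimately show ?thesis unfolding logloss_def[abs_def] by simp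
qed

lemma lp_deriv: "DERIV lp z :> lpp z"
proof -
  have "DERIV (\<lambda>z. - 1 / (1 + exp z)) z :> - (- (exp z) / (1 + exp z)^2)"
    using onepexp[of z] by (auto intro!: derivative_eq_intros simp: power2_eq_square)
  then show ?thesis unfolding lp_def[abs_def] lpp_def by simp
qed

lemma logloss_nonneg: "logloss z \<ge> 0"
  unfolding logloss_def by simp

lemma abs_lp_le: "\<bar>lp z\<bar> \<le> logloss z"
proof -
  have e: "exp z > 0" and p: "1 + exp z > 0" using onepexp[of z] by simp_all
  have l1: "ln (1 + exp (- z)) = ln (1 + exp z) - z"
  proof -
    have "1 + exp (-z) = (1 + exp z) / exp z" using e by (simp add: exp_minus field_simps)
    then show ?thesis using e p by (simp add: ln_div)
  qed
  have l2: "ln (exp z / (1 + exp z)) = z - ln (1 + exp z)"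
    using e p by (simp add: ln_div)
  have "ln (exp z / (1 + exp z)) \<le> exp z / (1 + exp z) - 1"
    by (rule ln_le_minus_one) (use e p in simp)
  moreover have "exp z / (1 + exp z) - 1 = - (1 / (1 + exp z))"
    using p by (simp add: field_simps)
  moreover have "\<bar>lp z\<bar> = 1 / (1 + exp z)" unfolding lp_def using p
    by simp
  ultimately show ?thesis unfolding logloss_def using l1 l2 by linarith
qed

lemma lpp_le: assumes "\<bar>t - z\<bar> \<le> 1/4" shows "lpp t \<le> 3 * logloss z"
proof -
  have e: "exp t > 0" "exp z > 0" by simp_all
  have p: "1 + exp t > 0" "1 + exp z > 0" using onepexp by auto
  have "lpp t = (exp t / (1 + exp t)) * (1 / (1 + exp t))"
    unfolding lpp_def by (simp add: power2_eq_square)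
  also have "\<dots> \<le> 1 * (1 / (1 + exp t))"
    by (rule mult_right_mono) (use p in \<open>simp_all add: divide_le_eq\<close>)
  also have "\<dots> \<le> 3 / (1 + exp z)"
  proof -
    have "z \<le> t + 1" using assms abs_ge_minus_self[of "t-z"] by linarith
    then have "exp z \<le> exp (t + 1)" by simp
    also have "\<dots> = exp t * exp 1" by (simp add: exp_add)
    also have "\<dots> \<le> exp t * 3" using exp_le e by simp
    finally have "1 + exp z \<le> 3 * (1 + exp t)" by simp
    then show ?thesis using p by (simp add: field_simps)
  qed
  also have "\<dots> = 3 * \<bar>lp z\<bar>" unfolding lp_def using p by simp
  also have "\<dots> \<le> 3 * logloss z" using abs_lp_le by simp
  finally show ?thesis .
qed

lemma logloss_taylor: assumes "\<bar>d\<bar> \<le> 1/4"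
  shows "logloss (z + d) \<le> logloss z + lp z * d + 3/2 * logloss z * d^2"
proof (cases "d = 0")
  case True then show ?thesis by simp
next
  case False
  define diff where "diff = (\<lambda>m::nat. if m = 0 then logloss else if m = 1 then lp else lpp)"
  have D: "\<forall>m t. m < 2 \<and> min z (z+d) \<le> t \<and> t \<le> max z (z+d) \<longrightarrow> DERIV (diff m) t :> diff (Suc m) t"
    unfolding diff_def using logloss_deriv lp_deriv by (auto simp: less_2_cases_iff)
  have "\<exists>t. (if z + d < z then z + d < t \<and> t < z else z < t \<and> t < z + d) \<and>
    logloss (z+d) = (\<Sum>m<2. (diff m z / fact m) * (z + d - z)^m) + (diff 2 t / fact 2) * (z + d - z)^2"
    by (rule Taylor[of 2 diff logloss, OF _ _ D]) (use False in \<open>auto simp: diff_def\<close>)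
  then obtain t where t: "(if z + d < z then z + d < t \<and> t < z else z < t \<and> t < z + d)"
    and eq: "logloss (z+d) = (\<Sum>m<2. (diff m z / fact m) * (z + d - z)^m) + (diff 2 t / fact 2) * (z + d - z)^2"
    by blast
  have "\<bar>t - z\<bar> \<le> 1/4" using t assms by (auto split: if_splits)
  then have "lpp t \<le> 3 * logloss z" by (rule lpp_le)
  then have "lpp t / 2 * d^2 \<le> 3/2 * logloss z * d^2"
    by (intro mult_right_mono) auto
  moreover have "logloss (z+d) = logloss z + lp z * d + lpp t / 2 * d^2"
    using eq by (simp add: diff_def numeral_2_eq_2)
  ultimately show ?thesis by linarith
qed


definition Gr :: "nat \<Rightarrow> (nat \<Rightarrow> nat \<Rightarrow> 'a::real_inner) \<Rightarrow> nat \<Rightarrow> 'a \<Rightarrow> 'a" where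
  "Gr n x m w = (1 / real n) *\<^sub>R (\<Sum>i<n. lp (w \<bullet> x m i) *\<^sub>R x m i)"

lemma Floc_deriv: "(Floc n x m has_derivative (\<lambda>h. Gr n x m w \<bullet> h)) (at w)"
proof -
  have d: "((\<lambda>w. logloss (w \<bullet> x m i)) has_derivative (\<lambda>h. (h \<bullet> x m i) * lp (w \<bullet> x m i))) (at w)" for i
    by (rule DERIV_compose_FDERIV[OF logloss_deriv]) (auto intro!: derivative_eq_intros)
  have "((\<lambda>w. (1 / real n) * (\<Sum>i<n. logloss (w \<bullet> x m i))) has_derivative
        (\<lambda>h. (1 / real n) * (\<Sum>i<n. (h \<bullet> x m i) * lp (w \<bullet> x m i)))) (at w)"
    by (intro has_derivative_mult_right has_derivative_sum d)
  moreover have "(\<Sum>i<n. (h \<bullet> x m i) * lp (w \<bullet> x m i)) = (\<Sum>i<n. lp (w \<bullet> x m i) *\<^sub>R x m i) \<bullet> h" for h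
  proof -
    have "h \<bullet> (\<Sum>i<n. lp (w \<bullet> x m i) *\<^sub>R x m i) = (\<Sum>i<n. (h \<bullet> x m i) * lp (w \<bullet> x m i))"
      by (simp add: inner_sum_right mult.commute)
    then show ?thesis by (simp add: inner_commute)
  qed
  then have "(\<lambda>h. (1 / real n) * (\<Sum>i<n. (h \<bullet> x m i) * lp (w \<bullet> x m i))) = (\<lambda>h. Gr n x m w \<bullet> h)"
    unfolding Gr_def by simp
  ultimately show ?thesis unfolding Floc_def[abs_def] by simp
qed

lemma grad_Floc: "grad (Floc n x m) w = Gr n x m w"
proof -
  have "\<exists>g. (Floc n x m has_derivative (\<lambda>h. g \<bullet> h)) (at w)" using Floc_deriv by blast
  then have "(Floc n x m has_derivative (\<lambda>h. grad (Floc n x m) w \<bullet> h)) (at w)"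
    unfolding grad_def by (rule someI_ex)
  from has_derivative_unique[OF this Floc_deriv]
  have "(\<lambda>h. grad (Floc n x m) w \<bullet> h) = (\<lambda>h. Gr n x m w \<bullet> h)" .
  then have "grad (Floc n x m) w \<bullet> (grad (Floc n x m) w - Gr n x m w) = Gr n x m w \<bullet> (grad (Floc n x m) w - Gr n x m w)"
    by metis
  then have "(grad (Floc n x m) w - Gr n x m w) \<bullet> (grad (Floc n x m) w - Gr n x m w) = 0"
    by (simp add: inner_diff_left)
  then show ?thesis by simp
qed


lemma Floc_nonneg: "Floc n x m w \<ge> 0"
  unfolding Floc_def by (intro mult_nonneg_nonneg sum_nonneg logloss_nonneg) auto

lemma norm_Gr:
  assumes "\<And>i. i < n \<Longrightarrow> norm (x m i) \<le> 1"
  shows "norm (Gr n x m w) \<le> Floc n x m w"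
proof -
  have "norm (\<Sum>i<n. lp (w \<bullet> x m i) *\<^sub>R x m i) \<le> (\<Sum>i<n. norm (lp (w \<bullet> x m i) *\<^sub>R x m i))"
    by (rule norm_sum)
  also have "\<dots> \<le> (\<Sum>i<n. logloss (w \<bullet> x m i))"
  proof (rule sum_mono)
    fix i assume "i \<in> {..<n}"
    then have "norm (x m i) \<le> 1" using assms by auto
    then have "\<bar>lp (w \<bullet> x m i)\<bar> * norm (x m i) \<le> \<bar>lp (w \<bullet> x m i)\<bar> * 1"
      by (intro mult_left_mono) auto
    then show "norm (lp (w \<bullet> x m i) *\<^sub>R x m i) \<le> logloss (w \<bullet> x m i)"
      using abs_lp_le[of "w \<bullet> x m i"] by simp
  qed
  finally show ?thesis unfolding Gr_def Floc_def by (simp add: divide_right_mono)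
qed

lemma step_descent:
  assumes n: "n \<ge> 1" and nx: "\<And>i. i < n \<Longrightarrow> norm (x m i) \<le> 1"
    and eta: "eta > 0" and F: "Floc n x m v \<le> 1 / (4 * eta)"
  shows "Floc n x m (v - eta *\<^sub>R grad (Floc n x m) v) \<le> Floc n x m v"
proof -
  define g where "g = Gr n x m v"
  define N where "N = real n"
  have N: "N > 0" using n by (simp add: N_def)
  define FF where "FF = Floc n x m v"
  have FF0: "FF \<ge> 0" unfolding FF_def by (rule Floc_nonneg)
  have gF: "norm g \<le> FF" unfolding g_def FF_def using nx by (rule norm_Gr)
  have etaF: "eta * FF \<le> 1/4" using F eta unfolding FF_def by (simp add: field_simps)
  define z where "z i = v \<bullet> x m i" for i
  define d where "d i = - eta * (g \<bullet> x m i)" for i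
  have dn: "\<bar>d i\<bar> \<le> eta * norm g" if "i < n" for i
  proof -
    have "\<bar>g \<bullet> x m i\<bar> \<le> norm g * norm (x m i)" by (rule Cauchy_Schwarz_ineq2)
    also have "\<dots> \<le> norm g * 1" using nx[OF that] by (intro mult_left_mono) auto
    finally show ?thesis unfolding d_def using eta by (simp add: abs_mult)
  qed
  have d4: "\<bar>d i\<bar> \<le> 1/4" if "i < n" for i
  proof -
    have "eta * norm g \<le> eta * FF" using gF eta by simp
    then show ?thesis using dn[OF that] etaF by linarith
  qed
  have d2: "(d i)^2 \<le> eta^2 * (norm g)^2" if "i < n" for i
  proof -
    have "(d i)^2 = \<bar>d i\<bar>^2" by simp
    also have "\<dots> \<le> (eta * norm g)^2" using dn[OF that] by (intro power_mono) auto
    finally show ?thesis by (simp add: power_mult_distrib)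
  qed
  have newz: "(v - eta *\<^sub>R grad (Floc n x m) v) \<bullet> x m i = z i + d i" for i
    unfolding z_def d_def grad_Floc g_def by (simp add: inner_diff_left)
  have "Floc n x m (v - eta *\<^sub>R grad (Floc n x m) v) = (1/N) * (\<Sum>i<n. logloss (z i + d i))"
    unfolding Floc_def N_def newz ..
  also have "\<dots> \<le> (1/N) * (\<Sum>i<n. logloss (z i) + lp (z i) * d i + 3/2 * logloss (z i) * (d i)^2)"
    using N by (intro mult_left_mono sum_mono logloss_taylor d4) auto
  also have "\<dots> = (1/N) * (\<Sum>i<n. logloss (z i)) + (1/N) * (\<Sum>i<n. lp (z i) * d i)
       + 3/2 * ((1/N) * (\<Sum>i<n. logloss (z i) * (d i)^2))"
    by (simp add: sum.distrib sum_distrib_left algebra_simps)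
  also have "(1/N) * (\<Sum>i<n. logloss (z i)) = FF"
    unfolding FF_def Floc_def N_def z_def ..
  also have "(1/N) * (\<Sum>i<n. lp (z i) * d i) = - eta * (g \<bullet> g)"
  proof -
    have "g \<bullet> g = (1/N) * (\<Sum>i<n. lp (z i) * (g \<bullet> x m i))"
      unfolding g_def Gr_def N_def z_def
      by (simp add: inner_sum_right inner_commute[of "Gr n x m v"] flip: g_def)
    then show ?thesis unfolding d_def
      by (simp add: sum_distrib_left algebra_simps flip: sum_negf)
  qed
  also have "(1/N) * (\<Sum>i<n. logloss (z i) * (d i)^2) \<le> (1/N) * (\<Sum>i<n. logloss (z i) * (eta^2 * (norm g)^2))"
    using N d2 by (intro mult_left_mono sum_mono mult_left_mono logloss_nonneg) auto
  also have "(1/N) * (\<Sum>i<n. logloss (z i) * (eta^2 * (norm g)^2)) = FF * (eta^2 * (norm g)^2)"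
    unfolding FF_def Floc_def N_def z_def by (simp add: sum_distrib_right)
  finally have A: "Floc n x m (v - eta *\<^sub>R grad (Floc n x m) v) \<le>
      FF + - eta * (g \<bullet> g) + 3/2 * (FF * (eta^2 * (norm g)^2))" by simp
  have "FF * (eta^2 * (norm g)^2) = (eta * FF) * (eta * (norm g)^2)" by (simp add: power2_eq_square)
  also have "\<dots> \<le> (1/4) * (eta * (norm g)^2)"
    using etaF eta by (intro mult_right_mono) auto
  finally have B: "FF * (eta^2 * (norm g)^2) \<le> (1/4) * (eta * (norm g)^2)" .
  have C: "g \<bullet> g = (norm g)^2" by (simp add: power2_norm_eq_inner)
  have "0 \<le> eta * (norm g)^2" using eta by simp
  moreover have D: "- eta * (g \<bullet> g) = - (eta * (norm g)^2)" using C by simp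
  ultimately show ?thesis using A B unfolding FF_def by linarith
qed


lemma iter_descent:
  assumes n: "n \<ge> 1" and nx: "\<And>i. i < n \<Longrightarrow> norm (x m i) \<le> 1"
    and eta: "eta > 0" and F: "Floc n x m v \<le> 1 / (4 * eta)"
  shows "Floc n x m (local_iter eta (Floc n x m) v (Suc k)) \<le> Floc n x m (local_iter eta (Floc n x m) v k)
    \<and> Floc n x m (local_iter eta (Floc n x m) v (Suc k)) \<le> Floc n x m v"
proof (induction k)
  case 0
  have "Floc n x m (local_iter eta (Floc n x m) v (Suc 0)) \<le> Floc n x m v"
    using step_descent[where x=x and m=m, OF n nx eta F] by simp
  then show ?case by simp
next
  case (Suc k)
  let ?u = "local_iter eta (Floc n x m) v (Suc k)"
  have "Floc n x m ?u \<le> 1 / (4 * eta)" using Suc F by linarith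
  then have "Floc n x m (?u - eta *\<^sub>R grad (Floc n x m) ?u) \<le> Floc n x m ?u"
    using step_descent[where x=x and m=m, OF n nx eta] by blast
  then show ?case using Suc by simp
qed

theorem lemma4p6:
  fixes x :: "nat \<Rightarrow> nat \<Rightarrow> real ^ 'd"
    and w0 :: "real ^ 'd"
    and M n K r :: nat
    and eta :: real
  assumes "M \<ge> 1" and "n \<ge> 1"
    and "\<And>m i. m < M \<Longrightarrow> i < n \<Longrightarrow> norm (x m i) \<le> 1"
    and "\<exists>w. \<forall>m<M. \<forall>i<n. w \<bullet> x m i > 0"
    and "eta > 0"
    and "Fglob M n x (localGD M n x eta K w0 r) \<le> 1 / (4 * eta * real M)"
  shows "\<forall>m<M. \<forall>k<K.
           Floc n x m (local_iter eta (Floc n x m) (localGD M n x eta K w0 r) (Suc k))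
         \<le> Floc n x m (local_iter eta (Floc n x m) (localGD M n x eta K w0 r) k)"
proof (intro allI impI)
  fix m k assume m: "m < M" and k: "k < K"
  define v where "v = localGD M n x eta K w0 r"
  have "Floc n x m v \<le> (\<Sum>m'<M. Floc n x m' v)"
    using m by (intro member_le_sum Floc_nonneg) auto
  also have "\<dots> = real M * Fglob M n x v"
    unfolding Fglob_def using assms(1) by simp
  also have "\<dots> \<le> real M * (1 / (4 * eta * real M))"
    using assms(6) unfolding v_def by (intro mult_left_mono) auto
  also have "\<dots> = 1 / (4 * eta)" using assms(1) by simp
  finally have F: "Floc n x m v \<le> 1 / (4 * eta)" .
  have nx: "\<And>i. i < n \<Longrightarrow> norm (x m i) \<le> 1" using assms(3) m by blast
  show "Floc n x m (local_iter eta (Floc n x m) (localGD M n x eta K w0 r) (Suc k))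
         \<le> Floc n x m (local_iter eta (Floc n x m) (localGD M n x eta K w0 r) k)"
    using iter_descent[where x=x and m=m, OF assms(2) nx assms(5) F] unfolding v_def by blast
qed

end
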